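(* Let $p$ be a prime and let $B$ be a finite brace whose order is a power of $p$. If $B$ is supersoluble, then $B$ is centrally nilpotent.
   Context: A brace (skew left brace) is a set $B$ with two binary operations $+$ and $\cdot$ such that $(B,+)$ and $(B,\cdot)$ are groups and $a(b+c)=ab-a+ac$ for all $a,b,c\in B$. $\lambda_a(b)=-a+ab$ defines a homomorphism $\lambda\colon(B,\cdot)\to\operatorname{Aut}(B,+)$. An ideal is a subset that is a subgroup of both groups, normal in both, and invariant under all $\lambda_b$; quotients by ideals are braces. $\operatorname{Soc}(B)=\operatorname{Ker}\lambda\cap Z(B,+)$, $\zeta(B)=\operatorname{Soc}(B)\cap Z(B,\cdot)$; $\zeta_0(B)=\{0\}$, $\zeta_{k+1}(B)/\zeta_k(B)=\zeta(B/\zeta_k(B))$; $B$ is centrally nilpotent if $B=\zeta_m(B)$ for some $m$. $B$ is supersoluble if there is a finite chain of ideals $\{0\}=I_0\le\dots\le I_n=B$ such that for each $i$, either $(I_{i+1}/I_i,+)$ is infinite cyclic and $I_{i+1}/I_i\le\operatorname{Soc}(B/I_i)$, or $I_{i+1}/I_i$ has prime order. *)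

theory Defs
  imports "HOL-Algebra.Algebra" "HOL-Computational_Algebra.Primes"
begin

definition brace :: "'a monoid \<Rightarrow> 'a monoid \<Rightarrow> bool" where
  "brace A M \<longleftrightarrow> group A \<and> group M \<and> carrier A = carrier M \<and>
     (\<forall>a\<in>carrier A. \<forall>b\<in>carrier A. \<forall>c\<in>carrier A.
        a \<otimes>\<^bsub>M\<^esub> (b \<otimes>\<^bsub>A\<^esub> c) =
          (a \<otimes>\<^bsub>M\<^esub> b) \<otimes>\<^bsub>A\<^esub> inv\<^bsub>A\<^esub> a \<otimes>\<^bsub>A\<^esub> (a \<otimes>\<^bsub>M\<^esub> c))"

definition brace_lambda :: "'a monoid \<Rightarrow> 'a monoid \<Rightarrow> 'a \<Rightarrow> 'a \<Rightarrow> 'a" where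
  "brace_lambda A M a b = inv\<^bsub>A\<^esub> a \<otimes>\<^bsub>A\<^esub> (a \<otimes>\<^bsub>M\<^esub> b)"

definition brace_ideal :: "'a monoid \<Rightarrow> 'a monoid \<Rightarrow> 'a set \<Rightarrow> bool" where
  "brace_ideal A M I \<longleftrightarrow> normal I A \<and> normal I M \<and>
     (\<forall>b\<in>carrier A. brace_lambda A M b ` I \<subseteq> I)"

definition brace_soc :: "'a monoid \<Rightarrow> 'a monoid \<Rightarrow> 'a set" where
  "brace_soc A M = {a \<in> carrier A. (\<forall>b\<in>carrier A. brace_lambda A M a b = b) \<and>
       (\<forall>b\<in>carrier A. a \<otimes>\<^bsub>A\<^esub> b = b \<otimes>\<^bsub>A\<^esub> a)}"

definition brace_center :: "'a monoid \<Rightarrow> 'a monoid \<Rightarrow> 'a set" where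
  "brace_center A M = {a \<in> brace_soc A M. \<forall>b\<in>carrier M. a \<otimes>\<^bsub>M\<^esub> b = b \<otimes>\<^bsub>M\<^esub> a}"

text \<open>The quotient brace B/I is (A Mod I, M Mod I) (cosets). Upper central series:
  zeta_0 = {0}, zeta_{k+1}/zeta_k = zeta(B/zeta_k), i.e.
  zeta_{k+1} = {x. x + zeta_k \<in> zeta(B/zeta_k)}.\<close>
fun upper_zeta :: "nat \<Rightarrow> 'a monoid \<Rightarrow> 'a monoid \<Rightarrow> 'a set" where
  "upper_zeta 0 A M = {\<one>\<^bsub>A\<^esub>}"
| "upper_zeta (Suc k) A M =
     (let I = upper_zeta k A M in
      {x \<in> carrier A. I #>\<^bsub>A\<^esub> x \<in> brace_center (A Mod I) (M Mod I)})"

definition centrally_nilpotent :: "'a monoid \<Rightarrow> 'a monoid \<Rightarrow> bool" where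
  "centrally_nilpotent A M \<longleftrightarrow> (\<exists>m. upper_zeta m A M = carrier A)"

definition quot_img :: "'a monoid \<Rightarrow> 'a set \<Rightarrow> 'a set \<Rightarrow> 'a set set" where
  "quot_img A J I = (\<lambda>x. I #>\<^bsub>A\<^esub> x) ` J"

definition supersoluble :: "'a monoid \<Rightarrow> 'a monoid \<Rightarrow> bool" where
  "supersoluble A M \<longleftrightarrow> (\<exists>(I :: nat \<Rightarrow> 'a set) n.
     I 0 = {\<one>\<^bsub>A\<^esub>} \<and> I n = carrier A \<and>
     (\<forall>i\<le>n. brace_ideal A M (I i)) \<and>
     (\<forall>i<n. I i \<subseteq> I (Suc i) \<and>
        ((infinite (quot_img A (I (Suc i)) (I i)) \<and>
          cyclic_group ((A Mod I i)\<lparr>carrier := quot_img A (I (Suc i)) (I i)\<rparr>) \<and>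
          quot_img A (I (Suc i)) (I i) \<subseteq> brace_soc (A Mod I i) (M Mod I i))
         \<or> Factorial_Ring.prime (card (quot_img A (I (Suc i)) (I i))))))"

end

theory Submission
  imports Defs
begin

lemma central_normal:
  assumes G: "group G" and H: "subgroup H G" and c: "\<And>h x. h \<in> H \<Longrightarrow> x \<in> carrier G \<Longrightarrow> h \<otimes>\<^bsub>G\<^esub> x = x \<otimes>\<^bsub>G\<^esub> h"
  shows "H \<lhd> G"
proof (rule group.normalI[OF G H], intro ballI)
  fix x assume "x \<in> carrier G"
  show "H #>\<^bsub>G\<^esub> x = x <#\<^bsub>G\<^esub> H" unfolding r_coset_def l_coset_def
  proof (rule SUP_cong[OF refl])
    fix h assume "h \<in> H" then show "{h \<otimes>\<^bsub>G\<^esub> x} = {x \<otimes>\<^bsub>G\<^esub> h}" using c[of h x] \<open>x \<in> carrier G\<close> by simp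
  qed
qed

locale br =
  fixes A M :: "'a monoid"
  assumes isbrace: "brace A M"
begin

lemma gA: "group A" and gM: "group M" and carr: "carrier M = carrier A"
  using isbrace unfolding brace_def by auto

sublocale A: group A by (rule gA)
sublocale M: group M by (rule gM)

lemma dist: "a \<in> carrier A \<Longrightarrow> b \<in> carrier A \<Longrightarrow> c \<in> carrier A \<Longrightarrow>
  a \<otimes>\<^bsub>M\<^esub> (b \<otimes>\<^bsub>A\<^esub> c) = (a \<otimes>\<^bsub>M\<^esub> b) \<otimes>\<^bsub>A\<^esub> inv\<^bsub>A\<^esub> a \<otimes>\<^bsub>A\<^esub> (a \<otimes>\<^bsub>M\<^esub> c)"
  using isbrace unfolding brace_def by auto

lemma mc[simp]: "a \<in> carrier A \<Longrightarrow> b \<in> carrier A \<Longrightarrow> a \<otimes>\<^bsub>M\<^esub> b \<in> carrier A"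
  using M.m_closed carr by auto
lemma ic[simp]: "a \<in> carrier A \<Longrightarrow> inv\<^bsub>M\<^esub> a \<in> carrier A"
  using M.inv_closed carr by auto

lemma one_eq: "\<one>\<^bsub>M\<^esub> = \<one>\<^bsub>A\<^esub>"
proof -
  have o: "\<one>\<^bsub>M\<^esub> \<in> carrier A" using carr by auto
  have "\<one>\<^bsub>M\<^esub> \<otimes>\<^bsub>M\<^esub> (\<one>\<^bsub>A\<^esub> \<otimes>\<^bsub>A\<^esub> \<one>\<^bsub>A\<^esub>) = (\<one>\<^bsub>M\<^esub> \<otimes>\<^bsub>M\<^esub> \<one>\<^bsub>A\<^esub>) \<otimes>\<^bsub>A\<^esub> inv\<^bsub>A\<^esub> \<one>\<^bsub>M\<^esub> \<otimes>\<^bsub>A\<^esub> (\<one>\<^bsub>M\<^esub> \<otimes>\<^bsub>M\<^esub> \<one>\<^bsub>A\<^esub>)"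
    using dist[OF o A.one_closed A.one_closed] .
  moreover have "\<one>\<^bsub>M\<^esub> \<otimes>\<^bsub>M\<^esub> \<one>\<^bsub>A\<^esub> = \<one>\<^bsub>A\<^esub>"
    using carr M.l_one[of "\<one>\<^bsub>A\<^esub>"] by simp
  ultimately have "\<one>\<^bsub>A\<^esub> = inv\<^bsub>A\<^esub> \<one>\<^bsub>M\<^esub>"
    using o by simp
  then show ?thesis using o
    by (metis A.inv_inv A.inv_one)
qed

definition lam where "lam a b = inv\<^bsub>A\<^esub> a \<otimes>\<^bsub>A\<^esub> (a \<otimes>\<^bsub>M\<^esub> b)"

lemma lam_eq: "lam a b = brace_lambda A M a b" by (simp add: lam_def brace_lambda_def)

lemma lam_closed[simp]: "a \<in> carrier A \<Longrightarrow> b \<in> carrier A \<Longrightarrow> lam a b \<in> carrier A"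
  by (simp add: lam_def)

lemma mul_lam: "a \<in> carrier A \<Longrightarrow> b \<in> carrier A \<Longrightarrow> a \<otimes>\<^bsub>M\<^esub> b = a \<otimes>\<^bsub>A\<^esub> lam a b"
  by (simp add: lam_def A.m_assoc[symmetric])

lemma lam_add: "a \<in> carrier A \<Longrightarrow> b \<in> carrier A \<Longrightarrow> c \<in> carrier A \<Longrightarrow>
   lam a (b \<otimes>\<^bsub>A\<^esub> c) = lam a b \<otimes>\<^bsub>A\<^esub> lam a c"
  by (simp add: lam_def dist A.m_assoc)

lemma Ml_one[simp]: "b \<in> carrier A \<Longrightarrow> \<one>\<^bsub>A\<^esub> \<otimes>\<^bsub>M\<^esub> b = b"
  using M.l_one[of b] carr one_eq by simp
lemma Mr_one[simp]: "b \<in> carrier A \<Longrightarrow> b \<otimes>\<^bsub>M\<^esub> \<one>\<^bsub>A\<^esub> = b"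
  using M.r_one[of b] carr one_eq by simp
lemma Ml_inv[simp]: "b \<in> carrier A \<Longrightarrow> inv\<^bsub>M\<^esub> b \<otimes>\<^bsub>M\<^esub> b = \<one>\<^bsub>A\<^esub>"
  using M.l_inv[of b] carr one_eq by simp
lemma Mr_inv[simp]: "b \<in> carrier A \<Longrightarrow> b \<otimes>\<^bsub>M\<^esub> inv\<^bsub>M\<^esub> b = \<one>\<^bsub>A\<^esub>"
  using M.r_inv[of b] carr one_eq by simp
lemma Massoc: "a \<in> carrier A \<Longrightarrow> b \<in> carrier A \<Longrightarrow> c \<in> carrier A \<Longrightarrow>
   a \<otimes>\<^bsub>M\<^esub> b \<otimes>\<^bsub>M\<^esub> c = a \<otimes>\<^bsub>M\<^esub> (b \<otimes>\<^bsub>M\<^esub> c)"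
  using M.m_assoc carr by simp

lemma lam_one: "b \<in> carrier A \<Longrightarrow> lam \<one>\<^bsub>A\<^esub> b = b"
  by (simp add: lam_def)

lemma lam_mult: "a \<in> carrier A \<Longrightarrow> b \<in> carrier A \<Longrightarrow> c \<in> carrier A \<Longrightarrow>
   lam (a \<otimes>\<^bsub>M\<^esub> b) c = lam a (lam b c)"
proof -
  assume a: "a \<in> carrier A" and b: "b \<in> carrier A" and c: "c \<in> carrier A"
  have "(a \<otimes>\<^bsub>M\<^esub> b) \<otimes>\<^bsub>M\<^esub> c = a \<otimes>\<^bsub>M\<^esub> (b \<otimes>\<^bsub>A\<^esub> lam b c)"
    using a b c by (simp add: Massoc mul_lam[of b c])
  also have "\<dots> = (a \<otimes>\<^bsub>M\<^esub> b) \<otimes>\<^bsub>A\<^esub> lam a (lam b c)"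
    using a b c by (simp add: dist lam_def A.m_assoc)
  finally show ?thesis using a b c
    by (simp add: lam_def A.m_assoc[symmetric])
qed

lemma lam_inv1: "a \<in> carrier A \<Longrightarrow> c \<in> carrier A \<Longrightarrow> lam a (lam (inv\<^bsub>M\<^esub> a) c) = c"
  by (simp add: lam_mult[symmetric] lam_one)
lemma lam_inv2: "a \<in> carrier A \<Longrightarrow> c \<in> carrier A \<Longrightarrow> lam (inv\<^bsub>M\<^esub> a) (lam a c) = c"
  by (simp add: lam_mult[symmetric] lam_one)

lemma lam_zero: "a \<in> carrier A \<Longrightarrow> lam a \<one>\<^bsub>A\<^esub> = \<one>\<^bsub>A\<^esub>"
proof -
  assume a: "a \<in> carrier A"
  have "lam a \<one>\<^bsub>A\<^esub> \<otimes>\<^bsub>A\<^esub> lam a \<one>\<^bsub>A\<^esub> = lam a \<one>\<^bsub>A\<^esub> \<otimes>\<^bsub>A\<^esub> \<one>\<^bsub>A\<^esub>"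
    using a lam_add[of a "\<one>\<^bsub>A\<^esub>" "\<one>\<^bsub>A\<^esub>"] by simp
  then show ?thesis using a by (meson A.l_cancel A.one_closed lam_closed)
qed

lemma lam_inj: "a \<in> carrier A \<Longrightarrow> b \<in> carrier A \<Longrightarrow> c \<in> carrier A \<Longrightarrow> lam a b = lam a c \<Longrightarrow> b = c"
  by (metis lam_inv2)

lemma add_mul: "a \<in> carrier A \<Longrightarrow> b \<in> carrier A \<Longrightarrow> a \<otimes>\<^bsub>A\<^esub> b = a \<otimes>\<^bsub>M\<^esub> lam (inv\<^bsub>M\<^esub> a) b"
  by (simp add: mul_lam lam_inv1)


abbreviation "bideal I \<equiv> brace_ideal A M I"

lemma ideal_nA: "bideal I \<Longrightarrow> I \<lhd> A" and ideal_nM: "bideal I \<Longrightarrow> I \<lhd> M"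
  by (auto simp: brace_ideal_def)
lemma ideal_lam: "bideal I \<Longrightarrow> b \<in> carrier A \<Longrightarrow> x \<in> I \<Longrightarrow> lam b x \<in> I"
  by (auto simp: brace_ideal_def lam_eq)
lemma ideal_sub: "bideal I \<Longrightarrow> I \<subseteq> carrier A"
  using ideal_nA normal_imp_subgroup subgroup.subset by blast

lemma cos_eq: assumes I: "bideal I" and x: "x \<in> carrier A"
  shows "I #>\<^bsub>M\<^esub> x = I #>\<^bsub>A\<^esub> x"
proof -
  interpret nA: normal I A using ideal_nA[OF I] .
  interpret nM: normal I M using ideal_nM[OF I] .
  have s: "I \<subseteq> carrier A" using ideal_sub[OF I] .
  have "I #>\<^bsub>M\<^esub> x = x <#\<^bsub>M\<^esub> I" using nM.coset_eq x carr by auto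
  moreover have "I #>\<^bsub>A\<^esub> x = x <#\<^bsub>A\<^esub> I" using nA.coset_eq x by auto
  moreover have "x <#\<^bsub>M\<^esub> I = x <#\<^bsub>A\<^esub> I"
  proof
    show "x <#\<^bsub>M\<^esub> I \<subseteq> x <#\<^bsub>A\<^esub> I"
      unfolding l_coset_def using mul_lam[OF x] ideal_lam[OF I x] s by blast
  next
    show "x <#\<^bsub>A\<^esub> I \<subseteq> x <#\<^bsub>M\<^esub> I"
      unfolding l_coset_def using add_mul[OF x] ideal_lam[OF I ic[OF x]] s by blast
  qed
  ultimately show ?thesis by simp
qed

lemma rcosets_eq: "bideal I \<Longrightarrow> rcosets\<^bsub>M\<^esub> I = rcosets\<^bsub>A\<^esub> I"
  unfolding RCOSETS_def using cos_eq carr by auto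

lemma QA_carr: "carrier (A Mod I) = (\<lambda>x. I #>\<^bsub>A\<^esub> x) ` carrier A"
  by (rule carrier_FactGroup)
lemma QM_carr: "bideal I \<Longrightarrow> carrier (M Mod I) = (\<lambda>x. I #>\<^bsub>A\<^esub> x) ` carrier A"
  using carrier_FactGroup[of M I] cos_eq carr by auto

lemma QA_mult: "bideal I \<Longrightarrow> x \<in> carrier A \<Longrightarrow> y \<in> carrier A \<Longrightarrow>
  (I #>\<^bsub>A\<^esub> x) \<otimes>\<^bsub>A Mod I\<^esub> (I #>\<^bsub>A\<^esub> y) = I #>\<^bsub>A\<^esub> (x \<otimes>\<^bsub>A\<^esub> y)"
  using normal.rcos_sum[OF ideal_nA] by simp

lemma QM_mult: "bideal I \<Longrightarrow> x \<in> carrier A \<Longrightarrow> y \<in> carrier A \<Longrightarrow>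
  (I #>\<^bsub>A\<^esub> x) \<otimes>\<^bsub>M Mod I\<^esub> (I #>\<^bsub>A\<^esub> y) = I #>\<^bsub>A\<^esub> (x \<otimes>\<^bsub>M\<^esub> y)"
  using normal.rcos_sum[OF ideal_nM, of I x y] carr by (simp add: cos_eq)

lemma QA_inv: "bideal I \<Longrightarrow> x \<in> carrier A \<Longrightarrow>
  inv\<^bsub>A Mod I\<^esub> (I #>\<^bsub>A\<^esub> x) = I #>\<^bsub>A\<^esub> (inv\<^bsub>A\<^esub> x)"
  using normal.inv_FactGroup[OF ideal_nA] normal.rcos_inv[OF ideal_nA] QA_carr by auto

lemma QM_inv: "bideal I \<Longrightarrow> x \<in> carrier A \<Longrightarrow>
  inv\<^bsub>M Mod I\<^esub> (I #>\<^bsub>A\<^esub> x) = I #>\<^bsub>A\<^esub> (inv\<^bsub>M\<^esub> x)"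
proof -
  assume I: "bideal I" and x: "x \<in> carrier A"
  have "I #>\<^bsub>M\<^esub> x \<in> carrier (M Mod I)" using x carr carrier_FactGroup[of M I] by auto
  then show ?thesis
    using normal.inv_FactGroup[OF ideal_nM[OF I]] normal.rcos_inv[OF ideal_nM[OF I], of x] x carr
    by (simp add: cos_eq[OF I])
qed

lemma QA_one: "bideal I \<Longrightarrow> \<one>\<^bsub>A Mod I\<^esub> = I #>\<^bsub>A\<^esub> \<one>\<^bsub>A\<^esub>"
  using A.coset_join2[of "\<one>\<^bsub>A\<^esub>" I] ideal_nA normal_imp_subgroup subgroup.one_closed
  by (metis A.one_closed one_FactGroup)
lemma QM_one: "bideal I \<Longrightarrow> \<one>\<^bsub>M Mod I\<^esub> = I #>\<^bsub>A\<^esub> \<one>\<^bsub>A\<^esub>"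
  using QA_one by simp

lemma Qeq: "bideal I \<Longrightarrow> x \<in> carrier A \<Longrightarrow> y \<in> carrier A \<Longrightarrow>
   (I #>\<^bsub>A\<^esub> x = I #>\<^bsub>A\<^esub> y) \<longleftrightarrow> x \<otimes>\<^bsub>A\<^esub> inv\<^bsub>A\<^esub> y \<in> I"
proof -
  assume I: "bideal I" and x: "x \<in> carrier A" and y: "y \<in> carrier A"
  have sg: "subgroup I A" using ideal_nA[OF I] normal_imp_subgroup by blast
  have "(I #>\<^bsub>A\<^esub> x = I #>\<^bsub>A\<^esub> y) \<longleftrightarrow> x \<in> I #>\<^bsub>A\<^esub> y"
    using A.repr_independence[OF _ y sg] A.rcos_self[OF x sg] by metis
  also have "\<dots> \<longleftrightarrow> x \<otimes>\<^bsub>A\<^esub> inv\<^bsub>A\<^esub> y \<in> I"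
    using subgroup.rcos_module[OF sg gA y x] .
  finally show ?thesis .
qed

lemma Qdist: assumes I: "bideal I" and U: "U \<in> carrier (A Mod I)" and V: "V \<in> carrier (A Mod I)"
  and W: "W \<in> carrier (A Mod I)"
  shows "U \<otimes>\<^bsub>M Mod I\<^esub> (V \<otimes>\<^bsub>A Mod I\<^esub> W) =
          (U \<otimes>\<^bsub>M Mod I\<^esub> V) \<otimes>\<^bsub>A Mod I\<^esub> inv\<^bsub>A Mod I\<^esub> U \<otimes>\<^bsub>A Mod I\<^esub> (U \<otimes>\<^bsub>M Mod I\<^esub> W)"
proof -
  obtain x y w where xyw: "x \<in> carrier A" "y \<in> carrier A" "w \<in> carrier A"
    "U = I #>\<^bsub>A\<^esub> x" "V = I #>\<^bsub>A\<^esub> y" "W = I #>\<^bsub>A\<^esub> w"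
    using U V W QA_carr by auto
  show ?thesis using xyw
    by (simp only: QA_mult[OF I] QM_mult[OF I] QA_inv[OF I] dist mc A.m_closed A.inv_closed)
qed

lemma Qbrace: assumes I: "bideal I" shows "brace (A Mod I) (M Mod I)"
proof -
  have g1: "group (A Mod I)" using normal.factorgroup_is_group[OF ideal_nA[OF I]] .
  have g2: "group (M Mod I)" using normal.factorgroup_is_group[OF ideal_nM[OF I]] .
  have c: "carrier (A Mod I) = carrier (M Mod I)" using QA_carr QM_carr[OF I] by simp
  show ?thesis unfolding brace_def using g1 g2 c Qdist[OF I] by blast
qed

lemma Qbr: "bideal I \<Longrightarrow> br (A Mod I) (M Mod I)"
  using Qbrace br.intro by blast

lemma Qlam: assumes I: "bideal I" and x: "x \<in> carrier A" and y: "y \<in> carrier A"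
  shows "br.lam (A Mod I) (M Mod I) (I #>\<^bsub>A\<^esub> x) (I #>\<^bsub>A\<^esub> y) = I #>\<^bsub>A\<^esub> (lam x y)"
  unfolding br.lam_def[OF Qbr[OF I]] lam_def
  by (simp only: QA_mult[OF I] QM_mult[OF I] QA_inv[OF I] x y mc A.m_closed A.inv_closed)


end

context br begin
lemma lam_iff: "a \<in> carrier A \<Longrightarrow> b \<in> carrier A \<Longrightarrow>
   brace_lambda A M a b = b \<longleftrightarrow> a \<otimes>\<^bsub>M\<^esub> b = a \<otimes>\<^bsub>A\<^esub> b"
  unfolding brace_lambda_def using A.inv_solve_left[of b a "a \<otimes>\<^bsub>M\<^esub> b"] by (simp add: eq_commute)

lemma center_char: "a \<in> brace_center A M \<longleftrightarrow> a \<in> carrier A \<and>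
   (\<forall>b\<in>carrier A. a \<otimes>\<^bsub>M\<^esub> b = a \<otimes>\<^bsub>A\<^esub> b \<and> a \<otimes>\<^bsub>A\<^esub> b = b \<otimes>\<^bsub>A\<^esub> a \<and> a \<otimes>\<^bsub>M\<^esub> b = b \<otimes>\<^bsub>M\<^esub> a)"
proof (cases "a \<in> carrier A")
  case True
  have "a \<in> brace_center A M \<longleftrightarrow> (\<forall>b\<in>carrier A. brace_lambda A M a b = b) \<and>
     (\<forall>b\<in>carrier A. a \<otimes>\<^bsub>A\<^esub> b = b \<otimes>\<^bsub>A\<^esub> a) \<and> (\<forall>b\<in>carrier A. a \<otimes>\<^bsub>M\<^esub> b = b \<otimes>\<^bsub>M\<^esub> a)"
    using True by (simp add: brace_center_def brace_soc_def carr)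
  also have "\<dots> \<longleftrightarrow>
   (\<forall>b\<in>carrier A. a \<otimes>\<^bsub>M\<^esub> b = a \<otimes>\<^bsub>A\<^esub> b \<and> a \<otimes>\<^bsub>A\<^esub> b = b \<otimes>\<^bsub>A\<^esub> a \<and> a \<otimes>\<^bsub>M\<^esub> b = b \<otimes>\<^bsub>M\<^esub> a)"
    using True by (simp add: lam_iff ball_conj_distrib)
  finally show ?thesis using True by simp
next
  case False then show ?thesis by (simp add: brace_center_def brace_soc_def)
qed

lemma cZ: assumes "a \<in> brace_center A M" "b \<in> carrier A"
  shows "a \<otimes>\<^bsub>M\<^esub> b = a \<otimes>\<^bsub>A\<^esub> b \<and> a \<otimes>\<^bsub>A\<^esub> b = b \<otimes>\<^bsub>A\<^esub> a \<and> a \<otimes>\<^bsub>M\<^esub> b = b \<otimes>\<^bsub>M\<^esub> a"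
  using bspec[OF conjunct2[OF center_char[THEN iffD1, OF assms(1)]] assms(2)] .

lemma cZc: "a \<in> brace_center A M \<Longrightarrow> a \<in> carrier A" using center_char by simp
lemma cZ1: "a \<in> brace_center A M \<Longrightarrow> b \<in> carrier A \<Longrightarrow> a \<otimes>\<^bsub>M\<^esub> b = a \<otimes>\<^bsub>A\<^esub> b"
  using cZ by simp
lemma cZ2: "a \<in> brace_center A M \<Longrightarrow> b \<in> carrier A \<Longrightarrow> b \<otimes>\<^bsub>A\<^esub> a = a \<otimes>\<^bsub>A\<^esub> b"
  using cZ by metis
lemma cZ3: "a \<in> brace_center A M \<Longrightarrow> b \<in> carrier A \<Longrightarrow> b \<otimes>\<^bsub>M\<^esub> a = a \<otimes>\<^bsub>M\<^esub> b"
  using cZ by metis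
lemma cZI: "a \<in> carrier A \<Longrightarrow> (\<And>b. b \<in> carrier A \<Longrightarrow> a \<otimes>\<^bsub>M\<^esub> b = a \<otimes>\<^bsub>A\<^esub> b) \<Longrightarrow>
   (\<And>b. b \<in> carrier A \<Longrightarrow> b \<otimes>\<^bsub>A\<^esub> a = a \<otimes>\<^bsub>A\<^esub> b) \<Longrightarrow>
   (\<And>b. b \<in> carrier A \<Longrightarrow> b \<otimes>\<^bsub>M\<^esub> a = a \<otimes>\<^bsub>M\<^esub> b) \<Longrightarrow> a \<in> brace_center A M"
  unfolding center_char by (metis)

lemma center_inv: assumes a: "a \<in> brace_center A M" shows "inv\<^bsub>M\<^esub> a = inv\<^bsub>A\<^esub> a"
proof -
  have ac: "a \<in> carrier A" using cZc[OF a] .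
  have ia: "inv\<^bsub>M\<^esub> a \<in> carrier A" using ac by simp
  have "inv\<^bsub>M\<^esub> a \<otimes>\<^bsub>A\<^esub> a = a \<otimes>\<^bsub>A\<^esub> inv\<^bsub>M\<^esub> a" using cZ2[OF a ia] .
  also have "\<dots> = a \<otimes>\<^bsub>M\<^esub> inv\<^bsub>M\<^esub> a" using cZ1[OF a ia] by simp
  also have "\<dots> = \<one>\<^bsub>A\<^esub>" using ac by simp
  finally show ?thesis using A.inv_equality[of "inv\<^bsub>M\<^esub> a" a] ac ia by simp
qed

lemma center_ideal: "bideal (brace_center A M)" (is "bideal ?Z")
proof -
  have sub: "?Z \<subseteq> carrier A" using cZc by auto
  have one: "\<one>\<^bsub>A\<^esub> \<in> ?Z" by (rule cZI) auto
  have add: "a \<otimes>\<^bsub>A\<^esub> a' \<in> ?Z" if a: "a \<in> ?Z" and a': "a' \<in> ?Z" for a a'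
  proof -
    have ac: "a \<in> carrier A" and a'c: "a' \<in> carrier A" using a a' cZc by auto
    have e: "a \<otimes>\<^bsub>A\<^esub> a' = a \<otimes>\<^bsub>M\<^esub> a'" using cZ1[OF a a'c] by simp
    show ?thesis unfolding e
    proof (rule cZI)
      show "a \<otimes>\<^bsub>M\<^esub> a' \<in> carrier A" using ac a'c by simp
      fix b assume b: "b \<in> carrier A"
      have "a \<otimes>\<^bsub>M\<^esub> a' \<otimes>\<^bsub>M\<^esub> b = a \<otimes>\<^bsub>M\<^esub> (a' \<otimes>\<^bsub>M\<^esub> b)" using ac a'c b Massoc by simp
      also have "\<dots> = a \<otimes>\<^bsub>A\<^esub> (a' \<otimes>\<^bsub>A\<^esub> b)" using cZ1[OF a] cZ1[OF a' b] a'c b by simp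
      also have "\<dots> = a \<otimes>\<^bsub>M\<^esub> a' \<otimes>\<^bsub>A\<^esub> b" using ac a'c b by (simp add: e[symmetric] A.m_assoc)
      finally show "a \<otimes>\<^bsub>M\<^esub> a' \<otimes>\<^bsub>M\<^esub> b = a \<otimes>\<^bsub>M\<^esub> a' \<otimes>\<^bsub>A\<^esub> b" .
      have "b \<otimes>\<^bsub>A\<^esub> (a \<otimes>\<^bsub>A\<^esub> a') = b \<otimes>\<^bsub>A\<^esub> a \<otimes>\<^bsub>A\<^esub> a'"
        using ac a'c b by (simp add: A.m_assoc)
      also have "\<dots> = a \<otimes>\<^bsub>A\<^esub> b \<otimes>\<^bsub>A\<^esub> a'" using cZ2[OF a b] by simp
      also have "\<dots> = a \<otimes>\<^bsub>A\<^esub> (b \<otimes>\<^bsub>A\<^esub> a')" using ac a'c b by (simp add: A.m_assoc)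
      also have "\<dots> = a \<otimes>\<^bsub>A\<^esub> (a' \<otimes>\<^bsub>A\<^esub> b)" using cZ2[OF a' b] by simp
      also have "\<dots> = a \<otimes>\<^bsub>A\<^esub> a' \<otimes>\<^bsub>A\<^esub> b" using ac a'c b by (simp add: A.m_assoc)
      finally show "b \<otimes>\<^bsub>A\<^esub> (a \<otimes>\<^bsub>M\<^esub> a') = a \<otimes>\<^bsub>M\<^esub> a' \<otimes>\<^bsub>A\<^esub> b"
        using e by simp
      have "b \<otimes>\<^bsub>M\<^esub> (a \<otimes>\<^bsub>M\<^esub> a') = b \<otimes>\<^bsub>M\<^esub> a \<otimes>\<^bsub>M\<^esub> a'"
        using ac a'c b by (simp add: Massoc)
      also have "\<dots> = a \<otimes>\<^bsub>M\<^esub> b \<otimes>\<^bsub>M\<^esub> a'" using cZ3[OF a b] by simp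
      also have "\<dots> = a \<otimes>\<^bsub>M\<^esub> (b \<otimes>\<^bsub>M\<^esub> a')" using ac a'c b by (simp add: Massoc)
      also have "\<dots> = a \<otimes>\<^bsub>M\<^esub> (a' \<otimes>\<^bsub>M\<^esub> b)" using cZ3[OF a' b] by simp
      also have "\<dots> = a \<otimes>\<^bsub>M\<^esub> a' \<otimes>\<^bsub>M\<^esub> b" using ac a'c b by (simp add: Massoc)
      finally show "b \<otimes>\<^bsub>M\<^esub> (a \<otimes>\<^bsub>M\<^esub> a') = a \<otimes>\<^bsub>M\<^esub> a' \<otimes>\<^bsub>M\<^esub> b" .
    qed
  qed
  have neg: "inv\<^bsub>A\<^esub> a \<in> ?Z" if a: "a \<in> ?Z" for a
  proof -
    have ac: "a \<in> carrier A" using cZc[OF a] .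
    have e: "inv\<^bsub>M\<^esub> a = inv\<^bsub>A\<^esub> a" using center_inv[OF a] by simp
    have ia: "inv\<^bsub>M\<^esub> a \<in> carrier A" using ac by simp
    show ?thesis unfolding e[symmetric]
    proof (rule cZI)
      show "inv\<^bsub>M\<^esub> a \<in> carrier A" using ia .
      fix b assume b: "b \<in> carrier A"
      have "a \<otimes>\<^bsub>A\<^esub> (inv\<^bsub>M\<^esub> a \<otimes>\<^bsub>M\<^esub> b) = a \<otimes>\<^bsub>M\<^esub> (inv\<^bsub>M\<^esub> a \<otimes>\<^bsub>M\<^esub> b)"
        using cZ1[OF a] b ia by simp
      also have "\<dots> = b" using ac b by (simp add: Massoc[symmetric])
      also have "\<dots> = a \<otimes>\<^bsub>A\<^esub> (inv\<^bsub>A\<^esub> a \<otimes>\<^bsub>A\<^esub> b)" using ac b by (simp add: A.m_assoc[symmetric])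
      finally have F: "a \<otimes>\<^bsub>A\<^esub> (inv\<^bsub>M\<^esub> a \<otimes>\<^bsub>M\<^esub> b) = a \<otimes>\<^bsub>A\<^esub> (inv\<^bsub>A\<^esub> a \<otimes>\<^bsub>A\<^esub> b)" .
      have "inv\<^bsub>M\<^esub> a \<otimes>\<^bsub>M\<^esub> b = inv\<^bsub>A\<^esub> a \<otimes>\<^bsub>A\<^esub> b"
        by (rule A.l_cancel[OF F mc[OF ia b] A.m_closed[OF A.inv_closed[OF ac] b] ac])
      then show "inv\<^bsub>M\<^esub> a \<otimes>\<^bsub>M\<^esub> b = inv\<^bsub>M\<^esub> a \<otimes>\<^bsub>A\<^esub> b" using e by simp
      have "b \<otimes>\<^bsub>A\<^esub> inv\<^bsub>A\<^esub> a = inv\<^bsub>A\<^esub> a \<otimes>\<^bsub>A\<^esub> (a \<otimes>\<^bsub>A\<^esub> b) \<otimes>\<^bsub>A\<^esub> inv\<^bsub>A\<^esub> a"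
        using ac b by (simp add: A.m_assoc[symmetric])
      also have "\<dots> = inv\<^bsub>A\<^esub> a \<otimes>\<^bsub>A\<^esub> (b \<otimes>\<^bsub>A\<^esub> a) \<otimes>\<^bsub>A\<^esub> inv\<^bsub>A\<^esub> a" using cZ2[OF a b] by simp
      also have "\<dots> = inv\<^bsub>A\<^esub> a \<otimes>\<^bsub>A\<^esub> b" using ac b by (simp add: A.m_assoc)
      finally show "b \<otimes>\<^bsub>A\<^esub> inv\<^bsub>M\<^esub> a = inv\<^bsub>M\<^esub> a \<otimes>\<^bsub>A\<^esub> b" using e by simp
      have "b \<otimes>\<^bsub>M\<^esub> inv\<^bsub>M\<^esub> a = inv\<^bsub>M\<^esub> a \<otimes>\<^bsub>M\<^esub> (a \<otimes>\<^bsub>M\<^esub> b) \<otimes>\<^bsub>M\<^esub> inv\<^bsub>M\<^esub> a"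
        using ac b ia by (simp add: Massoc[symmetric])
      also have "\<dots> = inv\<^bsub>M\<^esub> a \<otimes>\<^bsub>M\<^esub> (b \<otimes>\<^bsub>M\<^esub> a) \<otimes>\<^bsub>M\<^esub> inv\<^bsub>M\<^esub> a" using cZ3[OF a b] by simp
      also have "\<dots> = inv\<^bsub>M\<^esub> a \<otimes>\<^bsub>M\<^esub> b" using ac b ia by (simp add: Massoc)
      finally show "b \<otimes>\<^bsub>M\<^esub> inv\<^bsub>M\<^esub> a = inv\<^bsub>M\<^esub> a \<otimes>\<^bsub>M\<^esub> b" .
    qed
  qed
  have sgA: "subgroup ?Z A" using sub one add neg by (intro A.subgroupI) auto
  have sgM: "subgroup ?Z M"
  proof (rule M.subgroupI)
    show "?Z \<subseteq> carrier M" using sub carr by simp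
    show "?Z \<noteq> {}" using one by auto
    show "inv\<^bsub>M\<^esub> a \<in> ?Z" if "a \<in> ?Z" for a using that center_inv neg by simp
    show "a \<otimes>\<^bsub>M\<^esub> b \<in> ?Z" if "a \<in> ?Z" "b \<in> ?Z" for a b
      using that add cZ1 cZc by simp
  qed
  have nA: "?Z \<lhd> A" by (rule central_normal[OF gA sgA], rule cZ2[symmetric])
  have nM: "?Z \<lhd> M" by (rule central_normal[OF gM sgM], rule cZ3[symmetric]) (use carr in auto)
  have l: "brace_lambda A M b a = a" if b: "b \<in> carrier A" and a: "a \<in> ?Z" for a b
  proof -
    have ac: "a \<in> carrier A" using cZc[OF a] .
    have "b \<otimes>\<^bsub>M\<^esub> a = b \<otimes>\<^bsub>A\<^esub> a" using cZ1[OF a b] cZ2[OF a b] cZ3[OF a b] by simp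
    then show ?thesis unfolding brace_lambda_def using ac b by (simp add: A.m_assoc[symmetric])
  qed
  show ?thesis unfolding brace_ideal_def using nA nM l by auto
qed

end


declare mult_FactGroup[simp del]

context br begin

lemma preimage_ideal:
  assumes I: "bideal I" and J: "brace_ideal (A Mod I) (M Mod I) J"
  shows "bideal {x \<in> carrier A. I #>\<^bsub>A\<^esub> x \<in> J}" (is "bideal ?P")
proof -
  interpret Q: br "A Mod I" "M Mod I" by (rule Qbr[OF I])
  have JnA: "J \<lhd> A Mod I" and JnM: "J \<lhd> M Mod I" using J by (auto simp: brace_ideal_def)
  have Jl: "\<And>U V. U \<in> carrier (A Mod I) \<Longrightarrow> V \<in> J \<Longrightarrow> Q.lam U V \<in> J"
    using J unfolding Q.lam_eq brace_ideal_def by blast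
  have JsA: "subgroup J (A Mod I)" and JsM: "subgroup J (M Mod I)"
    using JnA JnM normal_imp_subgroup by auto
  have cA: "\<And>x. x \<in> carrier A \<Longrightarrow> I #>\<^bsub>A\<^esub> x \<in> carrier (A Mod I)" by (simp add: QA_carr)
  have cM: "\<And>x. x \<in> carrier A \<Longrightarrow> I #>\<^bsub>A\<^esub> x \<in> carrier (M Mod I)" by (simp add: QM_carr[OF I])
  have one: "\<one>\<^bsub>A\<^esub> \<in> ?P" using subgroup.one_closed[OF JsA] QA_one[OF I] by simp
  have sgA: "subgroup ?P A"
  proof (rule A.subgroupI)
    show "?P \<subseteq> carrier A" by auto
    show "?P \<noteq> {}" using one by auto
    fix a assume a: "a \<in> ?P"
    then have ac: "a \<in> carrier A" by simp
    have "I #>\<^bsub>A\<^esub> inv\<^bsub>A\<^esub> a = inv\<^bsub>A Mod I\<^esub> (I #>\<^bsub>A\<^esub> a)" using QA_inv[OF I ac] by simp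
    then show "inv\<^bsub>A\<^esub> a \<in> ?P" using subgroup.m_inv_closed[OF JsA] a ac by simp
  next
    fix a b assume a: "a \<in> ?P" and b: "b \<in> ?P"
    then have ac: "a \<in> carrier A" and bc: "b \<in> carrier A" by auto
    have "I #>\<^bsub>A\<^esub> (a \<otimes>\<^bsub>A\<^esub> b) = (I #>\<^bsub>A\<^esub> a) \<otimes>\<^bsub>A Mod I\<^esub> (I #>\<^bsub>A\<^esub> b)" using QA_mult[OF I ac bc] by simp
    then show "a \<otimes>\<^bsub>A\<^esub> b \<in> ?P" using subgroup.m_closed[OF JsA] a b ac bc by simp
  qed
  have nA: "?P \<lhd> A"
  proof (rule A.normal_invI[OF sgA])
    fix x h assume x: "x \<in> carrier A" and h: "h \<in> ?P"
    then have hc: "h \<in> carrier A" by simp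
    have "I #>\<^bsub>A\<^esub> (x \<otimes>\<^bsub>A\<^esub> h \<otimes>\<^bsub>A\<^esub> inv\<^bsub>A\<^esub> x) =
       (I #>\<^bsub>A\<^esub> x) \<otimes>\<^bsub>A Mod I\<^esub> (I #>\<^bsub>A\<^esub> h) \<otimes>\<^bsub>A Mod I\<^esub> inv\<^bsub>A Mod I\<^esub> (I #>\<^bsub>A\<^esub> x)"
      using x hc by (simp add: QA_mult[OF I] QA_inv[OF I])
    moreover have "(I #>\<^bsub>A\<^esub> x) \<otimes>\<^bsub>A Mod I\<^esub> (I #>\<^bsub>A\<^esub> h) \<otimes>\<^bsub>A Mod I\<^esub> inv\<^bsub>A Mod I\<^esub> (I #>\<^bsub>A\<^esub> x) \<in> J"
      using normal.inv_op_closed2[OF JnA cA[OF x]] h by simp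
    ultimately show "x \<otimes>\<^bsub>A\<^esub> h \<otimes>\<^bsub>A\<^esub> inv\<^bsub>A\<^esub> x \<in> ?P" using x hc by simp
  qed
  have sgM: "subgroup ?P M"
  proof (rule M.subgroupI)
    show "?P \<subseteq> carrier M" using carr by auto
    show "?P \<noteq> {}" using one by auto
    fix a assume a: "a \<in> ?P"
    then have ac: "a \<in> carrier A" by simp
    have "I #>\<^bsub>A\<^esub> inv\<^bsub>M\<^esub> a = inv\<^bsub>M Mod I\<^esub> (I #>\<^bsub>A\<^esub> a)" using QM_inv[OF I ac] by simp
    then show "inv\<^bsub>M\<^esub> a \<in> ?P" using subgroup.m_inv_closed[OF JsM] a ac by simp
  next
    fix a b assume a: "a \<in> ?P" and b: "b \<in> ?P"
    then have ac: "a \<in> carrier A" and bc: "b \<in> carrier A" by auto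
    have "I #>\<^bsub>A\<^esub> (a \<otimes>\<^bsub>M\<^esub> b) = (I #>\<^bsub>A\<^esub> a) \<otimes>\<^bsub>M Mod I\<^esub> (I #>\<^bsub>A\<^esub> b)" using QM_mult[OF I ac bc] by simp
    then show "a \<otimes>\<^bsub>M\<^esub> b \<in> ?P" using subgroup.m_closed[OF JsM] a b ac bc by simp
  qed
  have nM: "?P \<lhd> M"
  proof (rule M.normal_invI[OF sgM])
    fix x h assume x0: "x \<in> carrier M" and h: "h \<in> ?P"
    then have hc: "h \<in> carrier A" and x: "x \<in> carrier A" using carr by auto
    have "I #>\<^bsub>A\<^esub> (x \<otimes>\<^bsub>M\<^esub> h \<otimes>\<^bsub>M\<^esub> inv\<^bsub>M\<^esub> x) =
       (I #>\<^bsub>A\<^esub> x) \<otimes>\<^bsub>M Mod I\<^esub> (I #>\<^bsub>A\<^esub> h) \<otimes>\<^bsub>M Mod I\<^esub> inv\<^bsub>M Mod I\<^esub> (I #>\<^bsub>A\<^esub> x)"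
      using x hc by (simp add: QM_mult[OF I] QM_inv[OF I])
    moreover have "(I #>\<^bsub>A\<^esub> x) \<otimes>\<^bsub>M Mod I\<^esub> (I #>\<^bsub>A\<^esub> h) \<otimes>\<^bsub>M Mod I\<^esub> inv\<^bsub>M Mod I\<^esub> (I #>\<^bsub>A\<^esub> x) \<in> J"
      using normal.inv_op_closed2[OF JnM cM[OF x]] h by simp
    ultimately show "x \<otimes>\<^bsub>M\<^esub> h \<otimes>\<^bsub>M\<^esub> inv\<^bsub>M\<^esub> x \<in> ?P" using x hc by simp
  qed
  have l: "brace_lambda A M b h \<in> ?P" if b: "b \<in> carrier A" and h: "h \<in> ?P" for b h
  proof -
    have hc: "h \<in> carrier A" using h by simp
    have "I #>\<^bsub>A\<^esub> lam b h \<in> J" using Qlam[OF I b hc] Jl[OF cA[OF b]] h by force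
    then show ?thesis using b hc lam_closed[OF b hc] by (simp add: lam_eq)
  qed
  show ?thesis unfolding brace_ideal_def using nA nM l by auto
qed

lemma triv_ideal: "bideal {\<one>\<^bsub>A\<^esub>}"
  unfolding brace_ideal_def using A.one_is_normal M.one_is_normal one_eq lam_zero
  by (auto simp: lam_eq[symmetric])

lemma zeta_Suc: "upper_zeta (Suc k) A M = {x \<in> carrier A. upper_zeta k A M #>\<^bsub>A\<^esub> x \<in>
   brace_center (A Mod upper_zeta k A M) (M Mod upper_zeta k A M)}"
  by (simp add: Let_def)

lemma zeta_ideal: "bideal (upper_zeta k A M)"
proof (induction k)
  case 0 then show ?case using triv_ideal by simp
next
  case (Suc k)
  show ?case unfolding zeta_Suc
    by (rule preimage_ideal[OF Suc br.center_ideal[OF Qbr[OF Suc]]])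
qed

lemma center_cos_char:
  assumes Z: "bideal Z" and x: "x \<in> carrier A"
  shows "Z #>\<^bsub>A\<^esub> x \<in> brace_center (A Mod Z) (M Mod Z) \<longleftrightarrow>
    (\<forall>y\<in>carrier A. Z #>\<^bsub>A\<^esub> (x \<otimes>\<^bsub>M\<^esub> y) = Z #>\<^bsub>A\<^esub> (x \<otimes>\<^bsub>A\<^esub> y) \<and>
        Z #>\<^bsub>A\<^esub> (x \<otimes>\<^bsub>A\<^esub> y) = Z #>\<^bsub>A\<^esub> (y \<otimes>\<^bsub>A\<^esub> x) \<and>
        Z #>\<^bsub>A\<^esub> (x \<otimes>\<^bsub>M\<^esub> y) = Z #>\<^bsub>A\<^esub> (y \<otimes>\<^bsub>M\<^esub> x))"
proof -
  interpret Q: br "A Mod Z" "M Mod Z" by (rule Qbr[OF Z])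
  show ?thesis using x
    by (simp add: Q.center_char QA_carr QA_mult[OF Z] QM_mult[OF Z])
qed

lemma cos_mono: assumes "bideal I" "bideal Z" "I \<subseteq> Z" "u \<in> carrier A" "v \<in> carrier A"
  "I #>\<^bsub>A\<^esub> u = I #>\<^bsub>A\<^esub> v" shows "Z #>\<^bsub>A\<^esub> u = Z #>\<^bsub>A\<^esub> v"
  using assms Qeq by blast

end

lemma orbit_trivial:
  fixes p :: nat
  assumes ga: "group_action G E \<phi>" and ord: "order G = p ^ m" and p: "Factorial_Ring.prime p"
    and x: "x \<in> E" and S: "orbit G \<phi> x \<subseteq> S" "finite S" "card S < p"
    and g: "g \<in> carrier G"
  shows "\<phi> g x = x"
proof -
  have "card (orbit G \<phi> x) * card (stabilizer G \<phi> x) = order G"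
    using group_action.orbit_stabilizer_theorem[OF ga x] .
  then have "card (orbit G \<phi> x) dvd p ^ m" using ord by (metis dvd_triv_left)
  then obtain i where i: "card (orbit G \<phi> x) = p ^ i" using divides_primepow_nat[OF p] by auto
  have xo: "x \<in> orbit G \<phi> x" using group_action.orbit_refl[OF ga x] .
  have fo: "finite (orbit G \<phi> x)" using S finite_subset by auto
  have "card (orbit G \<phi> x) \<le> card S" using S card_mono by auto
  then have "p ^ i < p" using S i by simp
  then have "i = 0"
  proof -
    assume "p ^ i < p"
    have "1 < p" using prime_gt_1_nat[OF p] .
    show "i = 0"
    proof (rule ccontr)
      assume "i \<noteq> 0"
      then have "p ^ 1 \<le> p ^ i" using \<open>1 < p\<close> by (intro power_increasing) auto
      then show False using \<open>p ^ i < p\<close> by simp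
    qed
  qed
  then have "card (orbit G \<phi> x) = 1" using i by simp
  then obtain z where "orbit G \<phi> x = {z}" by (rule card_1_singletonE)
  then have "orbit G \<phi> x = {x}" using xo by simp
  moreover have "\<phi> g x \<in> orbit G \<phi> x" unfolding orbit_def using g by auto
  ultimately show ?thesis by simp
qed


lemma conj_fix:
  fixes p :: nat
  assumes G: "group G" and ord: "order G = p ^ m" and p: "Factorial_Ring.prime p"
    and J: "J \<subseteq> carrier G" "finite J" "card J \<le> p" "\<one>\<^bsub>G\<^esub> \<in> J"
    and j: "j \<in> J" "j \<noteq> \<one>\<^bsub>G\<^esub>"
    and cl: "\<And>g. g \<in> carrier G \<Longrightarrow> g \<otimes>\<^bsub>G\<^esub> j \<otimes>\<^bsub>G\<^esub> inv\<^bsub>G\<^esub> g \<in> J"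
    and g: "g \<in> carrier G"
  shows "g \<otimes>\<^bsub>G\<^esub> j = j \<otimes>\<^bsub>G\<^esub> g"
proof -
  interpret G: group G by (rule G)
  have jc: "j \<in> carrier G" using J j by auto
  let ?phi = "\<lambda>g. (\<lambda>h \<in> carrier G. g \<otimes>\<^bsub>G\<^esub> h \<otimes>\<^bsub>G\<^esub> inv\<^bsub>G\<^esub> g)"
  have ga: "group_action G (carrier G) ?phi" using G.action_by_conjugation .
  have sub: "orbit G ?phi j \<subseteq> J - {\<one>\<^bsub>G\<^esub>}"
  proof
    fix y assume "y \<in> orbit G ?phi j"
    then obtain h where h: "h \<in> carrier G" "y = h \<otimes>\<^bsub>G\<^esub> j \<otimes>\<^bsub>G\<^esub> inv\<^bsub>G\<^esub> h"
      unfolding orbit_def using jc by auto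
    have "y \<noteq> \<one>\<^bsub>G\<^esub>"
    proof
      assume "y = \<one>\<^bsub>G\<^esub>"
      then have "\<one>\<^bsub>G\<^esub> = h \<otimes>\<^bsub>G\<^esub> j \<otimes>\<^bsub>G\<^esub> inv\<^bsub>G\<^esub> h" using h by simp
      then have "h \<otimes>\<^bsub>G\<^esub> j = \<one>\<^bsub>G\<^esub> \<otimes>\<^bsub>G\<^esub> h"
        using G.inv_solve_right[of "\<one>\<^bsub>G\<^esub>" "h \<otimes>\<^bsub>G\<^esub> j" h] h jc by simp
      then have "h \<otimes>\<^bsub>G\<^esub> j = h" using h by simp
      then show False using h jc j by simp
    qed
    then show "y \<in> J - {\<one>\<^bsub>G\<^esub>}" using h cl by auto
  qed
  have cS: "card (J - {\<one>\<^bsub>G\<^esub>}) < p" using J p prime_gt_1_nat[of p] by (simp add: card_Diff_singleton)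
  have "?phi g j = j" by (rule orbit_trivial[OF ga ord p jc sub _ cS g]) (use J in auto)
  then have "j = g \<otimes>\<^bsub>G\<^esub> j \<otimes>\<^bsub>G\<^esub> inv\<^bsub>G\<^esub> g" using jc by simp
  then show ?thesis using G.inv_solve_right[of j "g \<otimes>\<^bsub>G\<^esub> j" g] g jc by simp
qed


context br begin

lemma lam_action: "group_action M (carrier A) (\<lambda>g. \<lambda>h \<in> carrier A. lam g h)"
proof -
  let ?phi = "\<lambda>g. \<lambda>h \<in> carrier A. lam g h"
  have bij: "?phi g \<in> Bij (carrier A)" if g: "g \<in> carrier A" for g
  proof -
    have "bij_betw (lam g) (carrier A) (carrier A)"
    proof (rule bij_betwI[where g="lam (inv\<^bsub>M\<^esub> g)"])
      show "lam g \<in> carrier A \<rightarrow> carrier A" using g by simp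
      show "lam (inv\<^bsub>M\<^esub> g) \<in> carrier A \<rightarrow> carrier A" using g by simp
      show "lam (inv\<^bsub>M\<^esub> g) (lam g x) = x" if "x \<in> carrier A" for x using lam_inv2 g that by simp
      show "lam g (lam (inv\<^bsub>M\<^esub> g) x) = x" if "x \<in> carrier A" for x using lam_inv1 g that by simp
    qed
    then show ?thesis unfolding Bij_def by simp
  qed
  have hom: "?phi \<in> hom M (BijGroup (carrier A))"
  proof (rule homI)
    show "?phi x \<in> carrier (BijGroup (carrier A))" if "x \<in> carrier M" for x
      using bij[of x] that carr by (simp add: BijGroup_def)
    show "?phi (x \<otimes>\<^bsub>M\<^esub> y) = ?phi x \<otimes>\<^bsub>BijGroup (carrier A)\<^esub> ?phi y"
      if "x \<in> carrier M" "y \<in> carrier M" for x y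
    proof -
      have xa: "x \<in> carrier A" and ya: "y \<in> carrier A" using that carr by auto
      have "?phi x \<otimes>\<^bsub>BijGroup (carrier A)\<^esub> ?phi y = compose (carrier A) (?phi x) (?phi y)"
        using bij[OF xa] bij[OF ya] by (simp add: BijGroup_def)
      also have "\<dots> = ?phi (x \<otimes>\<^bsub>M\<^esub> y)"
        unfolding compose_def using xa ya by (intro restrict_ext) (simp add: lam_mult[symmetric])
      finally show ?thesis by simp
    qed
  qed
  show ?thesis unfolding group_action_def group_hom_def group_hom_axioms_def
    using gM group_BijGroup hom by auto
qed

end

context br begin
lemma p_center:
  fixes p :: nat
  assumes ord: "card (carrier A) = p ^ m" and p: "Factorial_Ring.prime p"
    and J: "J \<subseteq> carrier A" "finite J" "card J \<le> p" "\<one>\<^bsub>A\<^esub> \<in> J"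
    and cM: "\<And>g j. g \<in> carrier A \<Longrightarrow> j \<in> J \<Longrightarrow> g \<otimes>\<^bsub>M\<^esub> j \<otimes>\<^bsub>M\<^esub> inv\<^bsub>M\<^esub> g \<in> J"
    and cA: "\<And>g j. g \<in> carrier A \<Longrightarrow> j \<in> J \<Longrightarrow> g \<otimes>\<^bsub>A\<^esub> j \<otimes>\<^bsub>A\<^esub> inv\<^bsub>A\<^esub> g \<in> J"
    and cL: "\<And>g j. g \<in> carrier A \<Longrightarrow> j \<in> J \<Longrightarrow> lam g j \<in> J"
  shows "J \<subseteq> brace_center A M"
proof
  fix j assume j: "j \<in> J"
  have jc: "j \<in> carrier A" using J j by auto
  show "j \<in> brace_center A M"
  proof (cases "j = \<one>\<^bsub>A\<^esub>")
    case True then show ?thesis by (auto intro!: cZI)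
  next
    case False
    have oA: "order A = p ^ m" using ord by (simp add: order_def)
    have oM: "order M = p ^ m" using ord carr by (simp add: order_def)
    have A1: "g \<otimes>\<^bsub>A\<^esub> j = j \<otimes>\<^bsub>A\<^esub> g" if g: "g \<in> carrier A" for g
      by (rule conj_fix[OF gA oA p J j False cA[OF _ j] g])
    have M1: "g \<otimes>\<^bsub>M\<^esub> j = j \<otimes>\<^bsub>M\<^esub> g" if g: "g \<in> carrier A" for g
      by (rule conj_fix[OF gM oM p _ J(2,3) _ j]) (use J False g cM[OF _ j] carr one_eq in auto)
    have L1: "lam g j = j" if g: "g \<in> carrier A" for g
    proof -
      let ?phi = "\<lambda>g. \<lambda>h \<in> carrier A. lam g h"
      have sub: "orbit M ?phi j \<subseteq> J - {\<one>\<^bsub>A\<^esub>}"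
      proof
        fix y assume "y \<in> orbit M ?phi j"
        then obtain h where h: "h \<in> carrier A" "y = lam h j"
          unfolding orbit_def using jc carr by auto
        have "y \<noteq> \<one>\<^bsub>A\<^esub>" using h lam_inj[of h j "\<one>\<^bsub>A\<^esub>"] lam_zero[of h] jc False by auto
        then show "y \<in> J - {\<one>\<^bsub>A\<^esub>}" using h cL j by auto
      qed
      have cS: "card (J - {\<one>\<^bsub>A\<^esub>}) < p" using J p prime_gt_1_nat[of p] by (simp add: card_Diff_singleton)
      have "?phi g j = j" by (rule orbit_trivial[OF lam_action oM p jc sub _ cS]) (use J g carr in auto)
      then show ?thesis using jc by simp
    qed
    show ?thesis
    proof (rule cZI[OF jc])
      fix b assume b: "b \<in> carrier A"
      have bj: "b \<otimes>\<^bsub>M\<^esub> j = b \<otimes>\<^bsub>A\<^esub> j" using mul_lam[OF b jc] L1[OF b] by simp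
      show "b \<otimes>\<^bsub>A\<^esub> j = j \<otimes>\<^bsub>A\<^esub> b" using A1[OF b] .
      show "b \<otimes>\<^bsub>M\<^esub> j = j \<otimes>\<^bsub>M\<^esub> b" using M1[OF b] .
      show "j \<otimes>\<^bsub>M\<^esub> b = j \<otimes>\<^bsub>A\<^esub> b" using M1[OF b] A1[OF b] bj by simp
    qed
  qed
qed

end


context br begin

lemma ideal_sgA: "bideal I \<Longrightarrow> subgroup I A" using ideal_nA normal_imp_subgroup by blast

lemma card_quot: assumes I: "bideal I" and K: "bideal K" and IK: "I \<subseteq> K"
  shows "card (quot_img A K I) * card I = card K"
proof -
  let ?H = "A\<lparr>carrier := K\<rparr>"
  have gH: "group ?H" using subgroup.subgroup_is_group[OF ideal_sgA[OF K] gA] .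
  have sI: "subgroup I ?H" using A.subgroup_incl[OF ideal_sgA[OF I] ideal_sgA[OF K] IK] .
  have "card (rcosets\<^bsub>?H\<^esub> I) * card I = order ?H" using group.lagrange[OF gH sI] .
  moreover have "rcosets\<^bsub>?H\<^esub> I = quot_img A K I"
    unfolding RCOSETS_def r_coset_def quot_img_def by auto
  ultimately show ?thesis by (simp add: order_def)
qed

lemma card_ideal_dvd: "bideal K \<Longrightarrow> card K dvd card (carrier A)"
  using A.lagrange[OF ideal_sgA] by (metis dvd_triv_right order_def)

lemma card_Q_dvd: "bideal I \<Longrightarrow> card (carrier (A Mod I)) dvd card (carrier A)"
  using A.lagrange[OF ideal_sgA, of I] by (metis dvd_triv_left order_def FactGroup_def partial_object.select_convs(1))

lemma step:
  fixes p :: nat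
  assumes fin: "finite (carrier A)" and ord: "card (carrier A) = p ^ k" and p: "Factorial_Ring.prime p"
    and I: "bideal I" and K: "bideal K" and IK: "I \<subseteq> K" and Z: "bideal Z" and IZ: "I \<subseteq> Z"
    and q: "Factorial_Ring.prime (card (quot_img A K I))"
  shows "K \<subseteq> {x \<in> carrier A. Z #>\<^bsub>A\<^esub> x \<in> brace_center (A Mod Z) (M Mod Z)}"
proof -
  interpret Q: br "A Mod I" "M Mod I" by (rule Qbr[OF I])
  let ?J = "quot_img A K I"
  have Ksub: "K \<subseteq> carrier A" using ideal_sub[OF K] .
  have "card ?J dvd card K" using card_quot[OF I K IK] by (metis dvd_triv_left)
  also have "\<dots> dvd p ^ k" using card_ideal_dvd[OF K] ord by simp
  finally have "card ?J dvd p" using prime_dvd_power[OF q] by blast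
  then have cJ: "card ?J = p" using primes_dvd_imp_eq[OF q p] by simp
  have "card (carrier (A Mod I)) dvd p ^ k" using card_Q_dvd[OF I] ord by simp
  then obtain m where m: "card (carrier (A Mod I)) = p ^ m" using divides_primepow_nat[OF p] by auto
  have Jsub: "?J \<subseteq> carrier (A Mod I)" unfolding quot_img_def QA_carr using Ksub by auto
  have Jfin: "finite ?J" unfolding quot_img_def using Ksub fin finite_subset by auto
  have J1: "\<one>\<^bsub>A Mod I\<^esub> \<in> ?J" unfolding quot_img_def QA_one[OF I]
    using subgroup.one_closed[OF ideal_sgA[OF K]] by auto
  have cM: "G \<otimes>\<^bsub>M Mod I\<^esub> j \<otimes>\<^bsub>M Mod I\<^esub> inv\<^bsub>M Mod I\<^esub> G \<in> ?J"
    if G: "G \<in> carrier (A Mod I)" and j: "j \<in> ?J" for G j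
  proof -
    obtain g where g: "g \<in> carrier A" "G = I #>\<^bsub>A\<^esub> g" using G QA_carr by auto
    obtain x where x: "x \<in> K" "j = I #>\<^bsub>A\<^esub> x" using j unfolding quot_img_def by auto
    have xc: "x \<in> carrier A" using x Ksub by auto
    have "G \<otimes>\<^bsub>M Mod I\<^esub> j \<otimes>\<^bsub>M Mod I\<^esub> inv\<^bsub>M Mod I\<^esub> G = I #>\<^bsub>A\<^esub> (g \<otimes>\<^bsub>M\<^esub> x \<otimes>\<^bsub>M\<^esub> inv\<^bsub>M\<^esub> g)"
      using g x xc by (simp add: QM_mult[OF I] QM_inv[OF I])
    moreover have "g \<otimes>\<^bsub>M\<^esub> x \<otimes>\<^bsub>M\<^esub> inv\<^bsub>M\<^esub> g \<in> K"
      using normal.inv_op_closed2[OF ideal_nM[OF K]] g x carr by simp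
    ultimately show ?thesis unfolding quot_img_def by auto
  qed
  have cA: "G \<otimes>\<^bsub>A Mod I\<^esub> j \<otimes>\<^bsub>A Mod I\<^esub> inv\<^bsub>A Mod I\<^esub> G \<in> ?J"
    if G: "G \<in> carrier (A Mod I)" and j: "j \<in> ?J" for G j
  proof -
    obtain g where g: "g \<in> carrier A" "G = I #>\<^bsub>A\<^esub> g" using G QA_carr by auto
    obtain x where x: "x \<in> K" "j = I #>\<^bsub>A\<^esub> x" using j unfolding quot_img_def by auto
    have xc: "x \<in> carrier A" using x Ksub by auto
    have "G \<otimes>\<^bsub>A Mod I\<^esub> j \<otimes>\<^bsub>A Mod I\<^esub> inv\<^bsub>A Mod I\<^esub> G = I #>\<^bsub>A\<^esub> (g \<otimes>\<^bsub>A\<^esub> x \<otimes>\<^bsub>A\<^esub> inv\<^bsub>A\<^esub> g)"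
      using g x xc by (simp add: QA_mult[OF I] QA_inv[OF I])
    moreover have "g \<otimes>\<^bsub>A\<^esub> x \<otimes>\<^bsub>A\<^esub> inv\<^bsub>A\<^esub> g \<in> K"
      using normal.inv_op_closed2[OF ideal_nA[OF K]] g x by simp
    ultimately show ?thesis unfolding quot_img_def by auto
  qed
  have cL: "Q.lam G j \<in> ?J" if G: "G \<in> carrier (A Mod I)" and j: "j \<in> ?J" for G j
  proof -
    obtain g where g: "g \<in> carrier A" "G = I #>\<^bsub>A\<^esub> g" using G QA_carr by auto
    obtain x where x: "x \<in> K" "j = I #>\<^bsub>A\<^esub> x" using j unfolding quot_img_def by auto
    have xc: "x \<in> carrier A" using x Ksub by auto
    have "Q.lam G j = I #>\<^bsub>A\<^esub> lam g x" using Qlam[OF I g(1) xc] g x by simp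
    moreover have "lam g x \<in> K" using ideal_lam[OF K g(1) x(1)] .
    ultimately show ?thesis unfolding quot_img_def by auto
  qed
  have Jc: "?J \<subseteq> brace_center (A Mod I) (M Mod I)"
    by (rule Q.p_center[OF m p Jsub Jfin _ J1 cM cA cL]) (use cJ in simp)
  show ?thesis
  proof
    fix x assume x: "x \<in> K"
    have xc: "x \<in> carrier A" using x Ksub by auto
    have "I #>\<^bsub>A\<^esub> x \<in> brace_center (A Mod I) (M Mod I)" using Jc x unfolding quot_img_def by auto
    then have H0: "\<forall>y\<in>carrier A. I #>\<^bsub>A\<^esub> (x \<otimes>\<^bsub>M\<^esub> y) = I #>\<^bsub>A\<^esub> (x \<otimes>\<^bsub>A\<^esub> y) \<and>
        I #>\<^bsub>A\<^esub> (x \<otimes>\<^bsub>A\<^esub> y) = I #>\<^bsub>A\<^esub> (y \<otimes>\<^bsub>A\<^esub> x) \<and>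
        I #>\<^bsub>A\<^esub> (x \<otimes>\<^bsub>M\<^esub> y) = I #>\<^bsub>A\<^esub> (y \<otimes>\<^bsub>M\<^esub> x)"
      by (rule iffD1[OF center_cos_char[OF I xc]])
    note H = H0
    have HZ: "\<forall>y\<in>carrier A. Z #>\<^bsub>A\<^esub> (x \<otimes>\<^bsub>M\<^esub> y) = Z #>\<^bsub>A\<^esub> (x \<otimes>\<^bsub>A\<^esub> y) \<and>
        Z #>\<^bsub>A\<^esub> (x \<otimes>\<^bsub>A\<^esub> y) = Z #>\<^bsub>A\<^esub> (y \<otimes>\<^bsub>A\<^esub> x) \<and>
        Z #>\<^bsub>A\<^esub> (x \<otimes>\<^bsub>M\<^esub> y) = Z #>\<^bsub>A\<^esub> (y \<otimes>\<^bsub>M\<^esub> x)"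
    proof
      fix y assume y: "y \<in> carrier A"
      have h: "I #>\<^bsub>A\<^esub> (x \<otimes>\<^bsub>M\<^esub> y) = I #>\<^bsub>A\<^esub> (x \<otimes>\<^bsub>A\<^esub> y)"
        "I #>\<^bsub>A\<^esub> (x \<otimes>\<^bsub>A\<^esub> y) = I #>\<^bsub>A\<^esub> (y \<otimes>\<^bsub>A\<^esub> x)"
        "I #>\<^bsub>A\<^esub> (x \<otimes>\<^bsub>M\<^esub> y) = I #>\<^bsub>A\<^esub> (y \<otimes>\<^bsub>M\<^esub> x)" using H y by auto
      show "Z #>\<^bsub>A\<^esub> (x \<otimes>\<^bsub>M\<^esub> y) = Z #>\<^bsub>A\<^esub> (x \<otimes>\<^bsub>A\<^esub> y) \<and>
        Z #>\<^bsub>A\<^esub> (x \<otimes>\<^bsub>A\<^esub> y) = Z #>\<^bsub>A\<^esub> (y \<otimes>\<^bsub>A\<^esub> x) \<and>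
        Z #>\<^bsub>A\<^esub> (x \<otimes>\<^bsub>M\<^esub> y) = Z #>\<^bsub>A\<^esub> (y \<otimes>\<^bsub>M\<^esub> x)"
        using cos_mono[OF I Z IZ _ _ h(1)] cos_mono[OF I Z IZ _ _ h(2)] cos_mono[OF I Z IZ _ _ h(3)] xc y
        by simp
    qed
    have "Z #>\<^bsub>A\<^esub> x \<in> brace_center (A Mod Z) (M Mod Z)" by (rule iffD2[OF center_cos_char[OF Z xc] HZ])
    then show "x \<in> {x \<in> carrier A. Z #>\<^bsub>A\<^esub> x \<in> brace_center (A Mod Z) (M Mod Z)}" using xc by simp
  qed
qed

end

theorem theorem3p7:
  fixes A M :: "'a monoid" and p :: nat
  assumes "Factorial_Ring.prime p"
    and "brace A M"
    and "finite (carrier A)"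
    and "\<exists>k. card (carrier A) = p ^ k"
    and "supersoluble A M"
  shows "centrally_nilpotent A M"
proof -
  interpret br A M by (rule br.intro[OF assms(2)])
  obtain k where k: "card (carrier A) = p ^ k" using assms(4) by auto
  obtain I :: "nat \<Rightarrow> 'a set" and n where
    I0: "I 0 = {\<one>\<^bsub>A\<^esub>}" and In: "I n = carrier A" and Iid: "\<forall>i\<le>n. bideal (I i)" and
    Is: "\<forall>i<n. I i \<subseteq> I (Suc i) \<and>
        ((infinite (quot_img A (I (Suc i)) (I i)) \<and>
          cyclic_group ((A Mod I i)\<lparr>carrier := quot_img A (I (Suc i)) (I i)\<rparr>) \<and>
          quot_img A (I (Suc i)) (I i) \<subseteq> brace_soc (A Mod I i) (M Mod I i))
         \<or> Factorial_Ring.prime (card (quot_img A (I (Suc i)) (I i))))"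
    using assms(5) unfolding supersoluble_def by blast
  have main: "i \<le> n \<Longrightarrow> I i \<subseteq> upper_zeta i A M" for i
  proof (induction i)
    case 0 then show ?case using I0 by simp
  next
    case (Suc i)
    then have IH: "I i \<subseteq> upper_zeta i A M" and i: "i < n" by auto
    have fq: "finite (quot_img A (I (Suc i)) (I i))"
      unfolding quot_img_def using ideal_sub Iid Suc.prems assms(3) finite_subset by (metis finite_imageI)
    then have q: "Factorial_Ring.prime (card (quot_img A (I (Suc i)) (I i)))" using Is i by blast
    show ?case unfolding zeta_Suc
      by (rule step[OF assms(3) k assms(1) _ _ _ zeta_ideal _ q]) (use Iid Is i IH in auto)
  qed
  have "upper_zeta n A M = carrier A" using main[of n] In ideal_sub[OF zeta_ideal[of n]] by auto
  then show ?thesis unfolding centrally_nilpotent_def by blast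
qed


end
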